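(* Let $f_1,\dots,f_T:\mathbb{R}^d\to\mathbb{R}$ be convex differentiable with $\|\nabla f_t(x)\|\le G$ for all $x$ and $t$, and let $f=\sum_{t=1}^Tf_t$. Let $g:\mathbb{R}^d\to\mathbb{R}$ be convex and differentiable, let $\gamma\ge0$, and assume there is a point $x$ with $g(x)<-\gamma$ and that $\min_{x:\,g(x)+\gamma=0}\|\nabla g(x)\|\ge\sigma>0$. Let $x_*$ and $x_\gamma$ be minimizers of $f$ over $\{g(x)\le0\}$ and over $\{g(x)\le-\gamma\}$, respectively (assumed to exist). Then $$|f(x_* )-f(x_\gamma)|\le\frac{G}{\sigma}\gamma T.$$
   Context: All norms are Euclidean. *)

theory Defs
  imports "HOL-Analysis.Analysis"
begin

end

theory Submission
  imports Defs
begin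

lemma line_deriv:
  fixes g :: "'a::real_inner \<Rightarrow> real"
  assumes "(g has_derivative (\<lambda>h. u \<bullet> h)) (at (p + s *\<^sub>R w))"
  shows "((\<lambda>s. g (p + s *\<^sub>R w)) has_real_derivative (u \<bullet> w)) (at s)"
proof -
  have "((\<lambda>s. p + s *\<^sub>R w) has_derivative (\<lambda>h. h *\<^sub>R w)) (at s)"
    by (auto intro!: derivative_eq_intros)
  from diff_chain_at[OF this assms]
  have "((\<lambda>s. g (p + s *\<^sub>R w)) has_derivative (\<lambda>h. u \<bullet> (h *\<^sub>R w))) (at s)"
    by (simp add: o_def)
  moreover have "(\<lambda>h. u \<bullet> (h *\<^sub>R w)) = (*) (u \<bullet> w)" by (rule ext) simp
  ultimately show ?thesis
    by (simp add: has_field_derivative_def)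
qed

lemma line_convex:
  fixes g :: "'a::real_vector \<Rightarrow> real"
  assumes "convex_on UNIV g"
  shows "convex_on UNIV (\<lambda>s. g (p + s *\<^sub>R w))"
proof (rule convex_onI)
  fix t x y :: real assume t: "0 < t" "t < 1"
  have "(1 - t) *\<^sub>R x + t *\<^sub>R y = (1 - t) * x + t * y" by simp
  moreover have "p + ((1 - t) * x + t * y) *\<^sub>R w = (1 - t) *\<^sub>R (p + x *\<^sub>R w) + t *\<^sub>R (p + y *\<^sub>R w)"
    by (simp add: algebra_simps)
  ultimately show "g (p + ((1 - t) *\<^sub>R x + t *\<^sub>R y) *\<^sub>R w) \<le> (1 - t) * g (p + x *\<^sub>R w) + t * g (p + y *\<^sub>R w)"
    using convex_onD[OF assms, of t "p + x *\<^sub>R w" "p + y *\<^sub>R w"] t by simp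
qed simp

lemma tangent:
  fixes g :: "'a::real_inner \<Rightarrow> real"
  assumes "convex_on UNIV g" "(g has_derivative (\<lambda>h. u \<bullet> h)) (at p)"
  shows "g x \<ge> g p + u \<bullet> (x - p)"
proof -
  have d: "((\<lambda>s. g (p + s *\<^sub>R (x - p))) has_real_derivative (u \<bullet> (x - p))) (at 0 within UNIV)"
    using line_deriv[of g u p 0 "x - p"] assms(2) by simp
  have "(\<lambda>s. g (p + s *\<^sub>R (x - p))) 1 - (\<lambda>s. g (p + s *\<^sub>R (x - p))) 0 \<ge> (u \<bullet> (x - p)) * (1 - 0)"
    by (rule convex_on_imp_above_tangent[OF line_convex[OF assms(1)] _ _ _ d]) auto
  then show ?thesis by simp
qed

lemma lip:
  fixes f :: "'a::real_inner \<Rightarrow> real"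
  assumes "\<And>x. (f has_derivative (\<lambda>h. a x \<bullet> h)) (at x)" "\<And>x. norm (a x) \<le> G"
  shows "\<bar>f x - f y\<bar> \<le> G * norm (x - y)"
proof -
  have "norm (f x - f y) \<le> G * norm (x - y)"
  proof (rule differentiable_bound[of UNIV])
    fix z
    show "(f has_derivative (\<lambda>h. a z \<bullet> h)) (at z within UNIV)" using assms(1) by simp
    have "onorm (\<lambda>h. a z \<bullet> h) \<le> norm (a z)"
      by (rule onorm_bound) (auto simp: Cauchy_Schwarz_ineq2)
    then show "onorm (\<lambda>h. a z \<bullet> h) \<le> G" using assms(2)[of z] by linarith
  qed auto
  then show ?thesis by simp
qed

lemma desc:
  fixes g :: "'a::real_inner \<Rightarrow> real"
  assumes "(g has_derivative (\<lambda>h. u \<bullet> h)) (at p)" "u \<bullet> w < 0"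
  shows "\<exists>d>0. \<forall>s>0. s < d \<longrightarrow> g (p + s *\<^sub>R w) < g p"
proof -
  have "((\<lambda>s. g (p + s *\<^sub>R w)) has_real_derivative (u \<bullet> w)) (at 0)"
    using line_deriv[of g u p 0 w] assms(1) by simp
  from DERIV_neg_dec_right[OF this assms(2)] show ?thesis by simp
qed

theorem mainTheorem10:
  fixes fs :: "nat \<Rightarrow> real ^ 'd \<Rightarrow> real"
    and gradf :: "nat \<Rightarrow> real ^ 'd \<Rightarrow> real ^ 'd"
    and g :: "real ^ 'd \<Rightarrow> real"
    and gradg :: "real ^ 'd \<Rightarrow> real ^ 'd"
    and T :: nat and G \<gamma> \<sigma> :: real
    and xstar xgam :: "real ^ 'd"
  assumes conv_f: "\<And>t. t \<in> {1..T} \<Longrightarrow> convex_on UNIV (fs t)"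
    and diff_f: "\<And>t x. t \<in> {1..T} \<Longrightarrow> (fs t has_derivative (\<lambda>h. gradf t x \<bullet> h)) (at x)"
    and grad_bound: "\<And>t x. t \<in> {1..T} \<Longrightarrow> norm (gradf t x) \<le> G"
    and conv_g: "convex_on UNIV g"
    and diff_g: "\<And>x. (g has_derivative (\<lambda>h. gradg x \<bullet> h)) (at x)"
    and gamma_nonneg: "\<gamma> \<ge> 0"
    and slater: "\<exists>x. g x < - \<gamma>"
    and sigma_pos: "\<sigma> > 0"
    and sigma_bound: "\<And>x. g x + \<gamma> = 0 \<Longrightarrow> norm (gradg x) \<ge> \<sigma>"
    and xstar_feas: "g xstar \<le> 0"
    and xstar_min: "\<And>y. g y \<le> 0 \<Longrightarrow> (\<Sum>t\<in>{1..T}. fs t xstar) \<le> (\<Sum>t\<in>{1..T}. fs t y)"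
    and xgam_feas: "g xgam \<le> - \<gamma>"
    and xgam_min: "\<And>y. g y \<le> - \<gamma> \<Longrightarrow> (\<Sum>t\<in>{1..T}. fs t xgam) \<le> (\<Sum>t\<in>{1..T}. fs t y)"
  shows "\<bar>(\<Sum>t\<in>{1..T}. fs t xstar) - (\<Sum>t\<in>{1..T}. fs t xgam)\<bar> \<le> G / \<sigma> * \<gamma> * real T"
proof -
  let ?F = "\<lambda>x. \<Sum>t\<in>{1..T}. fs t x"
  define C where "C = {y. g y \<le> - \<gamma>}"
  have contg: "continuous_on UNIV g"
    using diff_g by (meson has_derivative_continuous continuous_at_imp_continuous_on)
  have "closed C" unfolding C_def
    using closed_Collect_le[OF contg continuous_on_const] by simp
  moreover have "C \<noteq> {}" using xgam_feas C_def by auto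
  ultimately have pC: "closest_point C xstar \<in> C"
    and pmin: "\<forall>y\<in>C. dist xstar (closest_point C xstar) \<le> dist xstar y"
    using closest_point_exists by blast+
  define p where "p = closest_point C xstar"
  have pC': "g p \<le> - \<gamma>" using pC p_def C_def by simp
  have pmin': "\<And>y. g y \<le> - \<gamma> \<Longrightarrow> norm (xstar - p) \<le> norm (xstar - y)"
    using pmin p_def C_def by (auto simp: dist_norm)
  define v where "v = xstar - p"
  have vbound: "norm v \<le> \<gamma> / \<sigma>"
  proof (cases "v = 0")
    case True then show ?thesis using gamma_nonneg sigma_pos by simp
  next
    case False
    have nv: "norm v > 0" using False by simp
    have gp: "g p = - \<gamma>"
    proof (rule ccontr)
      assume "g p \<noteq> - \<gamma>"
      then have lt: "g p < - \<gamma>" using pC' by simp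
      have "continuous_on UNIV (\<lambda>s. g (p + s *\<^sub>R v))"
        by (rule continuous_on_compose2[OF contg]) (auto intro!: continuous_intros)
      hence "continuous (at 0) (\<lambda>s. g (p + s *\<^sub>R v))"
        by (simp add: continuous_on_eq_continuous_at)
      hence "((\<lambda>s. g (p + s *\<^sub>R v)) \<longlongrightarrow> g p) (at 0)"
        by (simp add: isCont_def)
      hence "\<forall>\<^sub>F s in at 0. g (p + s *\<^sub>R v) < - \<gamma>"
        using lt by (rule order_tendstoD)
      then obtain d where d: "d > 0" "\<And>s. s \<noteq> 0 \<Longrightarrow> dist s 0 < d \<Longrightarrow> g (p + s *\<^sub>R v) < - \<gamma>"
        by (auto simp: eventually_at)
      define s where "s = min (d/2) (1/2)"
      have s: "0 < s" "s < 1" "dist s 0 < d" using d s_def by auto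
      have "norm (xstar - p) \<le> norm (xstar - (p + s *\<^sub>R v))"
        using pmin' d(2)[of s] s by auto
      also have "xstar - (p + s *\<^sub>R v) = (1 - s) *\<^sub>R v" by (simp add: v_def algebra_simps)
      finally have "norm v \<le> (1 - s) * norm v" using s by (simp add: v_def)
      then show False using s nv by (simp add: mult_le_cancel_right1)
    qed
    define u where "u = gradg p"
    have nu: "norm u \<ge> \<sigma>" using sigma_bound[of p] gp u_def by simp
    have nu0: "norm u > 0" using nu sigma_pos by linarith
    have uv: "u \<bullet> v \<ge> norm u * norm v"
    proof (rule ccontr)
      assume A: "\<not> ?thesis"
      define w where "w = (1 / norm v) *\<^sub>R v - (1 / norm u) *\<^sub>R u"
      have uw: "u \<bullet> w = u \<bullet> v / norm v - norm u"
        by (simp add: w_def inner_diff_right dot_square_norm power2_eq_square)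
      have uw0: "u \<bullet> w < 0" using A nv nu0 unfolding uw by (simp add: field_simps mult.commute)
      have vw: "v \<bullet> w = norm v - u \<bullet> v / norm u"
        by (simp add: w_def inner_diff_right dot_square_norm power2_eq_square inner_commute)
      have vw0: "v \<bullet> w > 0" using A nv nu0 unfolding vw by (simp add: field_simps)
      have w0: "w \<noteq> 0" using uw0 by auto
      obtain d where d: "d > 0" "\<And>s. s > 0 \<Longrightarrow> s < d \<Longrightarrow> g (p + s *\<^sub>R w) < g p"
        using desc[OF diff_g[of p, folded u_def] uw0] by blast
      define s where "s = min (d/2) ((v \<bullet> w) / (norm w)^2)"
      have s: "s > 0" "s < d" using d vw0 w0 by (auto simp: s_def)
      have s2: "s * (norm w)^2 \<le> v \<bullet> w" using w0 by (simp add: s_def field_simps min_def)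
      have "g (p + s *\<^sub>R w) \<le> - \<gamma>" using d(2)[OF s] gp by simp
      hence "norm v \<le> norm (xstar - (p + s *\<^sub>R w))" using pmin' v_def by simp
      also have "xstar - (p + s *\<^sub>R w) = v - s *\<^sub>R w" by (simp add: v_def)
      finally have "(norm v)^2 \<le> (norm (v - s *\<^sub>R w))^2" by (simp add: power_mono)
      also have "\<dots> = (norm v)^2 - 2 * s * (v \<bullet> w) + s^2 * (norm w)^2"
        unfolding power2_norm_eq_inner by (simp add: inner_diff_left inner_diff_right inner_commute algebra_simps power2_eq_square)
      finally have "2 * s * (v \<bullet> w) \<le> s * (s * (norm w)^2)" by (simp add: power2_eq_square algebra_simps)
      also have "\<dots> \<le> s * (v \<bullet> w)" using s2 s by (simp add: mult_left_mono)
      finally show False using s vw0 by (simp add: mult_le_cancel_right1)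
    qed
    have "g xstar \<ge> g p + u \<bullet> (xstar - p)"
      using tangent[OF conv_g diff_g[of p, folded u_def]] .
    hence "0 \<ge> - \<gamma> + norm u * norm v" using xstar_feas gp uv v_def by simp
    moreover have "\<sigma> * norm v \<le> norm u * norm v" using nu by (simp add: mult_right_mono)
    ultimately have "\<sigma> * norm v \<le> \<gamma>" by simp
    then show ?thesis using sigma_pos by (simp add: field_simps mult.commute)
  qed
  have lipF: "\<bar>?F a - ?F b\<bar> \<le> real T * G * norm (a - b)" for a b
  proof -
    have "\<bar>?F a - ?F b\<bar> = \<bar>\<Sum>t\<in>{1..T}. fs t a - fs t b\<bar>" by (simp add: sum_subtractf)
    also have "\<dots> \<le> (\<Sum>t\<in>{1..T}. \<bar>fs t a - fs t b\<bar>)" by (rule sum_abs)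
    also have "\<dots> \<le> (\<Sum>t\<in>{1..T}. G * norm (a - b))"
      by (rule sum_mono) (rule lip[OF diff_f grad_bound], auto)
    also have "\<dots> = real T * G * norm (a - b)" by simp
    finally show ?thesis .
  qed
  have TG: "real T * G \<ge> 0"
  proof (cases "T = 0")
    case False
    then have "norm (gradf 1 xstar) \<le> G" using grad_bound[of 1 xstar] by auto
    then have "G \<ge> 0" using norm_ge_zero[of "gradf 1 xstar"] by linarith
    then show ?thesis by simp
  qed simp
  have h1: "?F xstar \<le> ?F xgam" using xstar_min xgam_feas gamma_nonneg by simp
  have h2: "?F xgam \<le> ?F p" using xgam_min pC' by simp
  have h3: "?F p \<le> ?F xstar + real T * G * norm v"
    using lipF[of p xstar] v_def by (simp add: norm_minus_commute)
  have h4: "real T * G * norm v \<le> real T * G * (\<gamma> / \<sigma>)"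
    using vbound TG by (rule mult_left_mono)
  have "G / \<sigma> * \<gamma> * real T = real T * G * (\<gamma> / \<sigma>)" by simp
  then show ?thesis using h1 h2 h3 h4 by linarith
qed

end
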